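(* For almost all $n$-variable Boolean functions $f$ it holds that $NN(f)>\frac{2^{n/2}}{n}$; that is, the fraction of Boolean functions $f:\{0,1\}^n\to\{0,1\}$ satisfying $NN(f)>2^{n/2}/n$ tends to $1$ as $n\to\infty$.
   Context: For a Boolean function $f:\{0,1\}^n\to\{0,1\}$, a nearest neighbor representation is a pair of disjoint sets $(P,N)$ of points of $\mathbb R^n$ such that for every $a\in\{0,1\}^n$: if $f(a)=1$, there is $b\in P$ with $d(a,b)<d(a,c)$ for all $c\in N$; if $f(a)=0$, there is $b\in N$ with $d(a,b)<d(a,c)$ for all $c\in P$ ($d$ = Euclidean distance). $NN(f)$ is the minimum of $|P\cup N|$ over all nearest neighbor representations of $f$. *)

theory Defs
  imports Complex_Main "HOL-Library.FuncSet"
begin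

definition cube :: "nat \<Rightarrow> bool list set" where
  "cube n = {xs. length xs = n}"

definition rpoints :: "nat \<Rightarrow> real list set" where
  "rpoints n = {p. length p = n}"

definition edist :: "nat \<Rightarrow> bool list \<Rightarrow> real list \<Rightarrow> real" where
  "edist n a b = sqrt (\<Sum>i<n. (of_bool (a ! i) - b ! i)^2)"

definition boolfuns :: "nat \<Rightarrow> (bool list \<Rightarrow> bool) set" where
  "boolfuns n = cube n \<rightarrow>\<^sub>E (UNIV :: bool set)"

definition is_nn_rep :: "nat \<Rightarrow> (bool list \<Rightarrow> bool) \<Rightarrow> real list set \<Rightarrow> real list set \<Rightarrow> bool" where
  "is_nn_rep n f P N \<longleftrightarrow>
     P \<subseteq> rpoints n \<and> N \<subseteq> rpoints n \<and> finite P \<and> finite N \<and> P \<inter> N = {} \<and>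
     (\<forall>a\<in>cube n.
        (f a \<longrightarrow> (\<exists>b\<in>P. \<forall>c\<in>N. edist n a b < edist n a c)) \<and>
        (\<not> f a \<longrightarrow> (\<exists>b\<in>N. \<forall>c\<in>P. edist n a b < edist n a c)))"

definition NN :: "nat \<Rightarrow> (bool list \<Rightarrow> bool) \<Rightarrow> nat" where
  "NN n f = (LEAST k. \<exists>P N. is_nn_rep n f P N \<and> card (P \<union> N) = k)"

end

theory Submission
  imports Defs "HOL-Library.Function_Algebras"
begin

definition fscale :: "real \<Rightarrow> (nat \<Rightarrow> real) \<Rightarrow> (nat \<Rightarrow> real)" where
  "fscale c f = (\<lambda>i. c * f i)"

interpretation fv: vector_space fscale
  by unfold_locales (auto simp: fscale_def fun_eq_iff algebra_simps)

lemma sum_fun_apply: "(sum f A :: nat \<Rightarrow> real) x = (\<Sum>a\<in>A. f a x)"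
  by (induction A rule: infinite_finite_induct) auto

lemma cube_finite: "finite (cube n)"
proof -
  have "cube n = {xs. set xs \<subseteq> (UNIV::bool set) \<and> length xs = n}" by (auto simp: cube_def)
  thus ?thesis using finite_lists_length_eq[of "UNIV::bool set" n] by simp
qed

lemma radon_dep:
  assumes Y: "Y \<subseteq> cube n" and cY: "card Y \<ge> n + 2"
  shows "\<exists>l::bool list \<Rightarrow> real. (\<exists>y\<in>Y. l y > 0) \<and> (\<forall>i<n. (\<Sum>y\<in>Y. l y * of_bool (y!i)) = 0) \<and> (\<Sum>y\<in>Y. l y) = 0"
proof -
  have fY: "finite Y" using Y cube_finite finite_subset by blast
  define emb where "emb y = (\<lambda>i. if i < n then of_bool (y!i) else if i = n then 1 else (0::real))" for y :: "bool list"
  define e where "e i = (\<lambda>j. if j = i then 1 else (0::real))" for i :: nat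
  have inj: "inj_on emb Y"
  proof
    fix x y assume xy: "x \<in> Y" "y \<in> Y" "emb x = emb y"
    have lx: "length x = n" "length y = n" using xy Y by (auto simp: cube_def)
    show "x = y"
    proof (rule nth_equalityI)
      fix i assume "i < length x"
      hence "emb x i = emb y i" using xy by simp
      thus "x!i = y!i" using \<open>i < length x\<close> lx by (cases "x!i"; cases "y!i") (auto simp: emb_def)
    qed (use lx in simp)
  qed
  have cV: "card (emb ` Y) \<ge> n + 2" using card_image[OF inj] cY by simp
  have fB: "finite (e ` {..n})" by simp
  have cB: "card (e ` {..n}) \<le> n + 1" using card_image_le[of "{..n}" e] by simp
  have sp: "emb ` Y \<subseteq> fv.span (e ` {..n})"
  proof
    fix v assume "v \<in> emb ` Y"
    then obtain y where v: "v = emb y" by blast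
    have "v = (\<Sum>i\<le>n. fscale (v i) (e i))"
    proof
      fix j
      show "v j = (\<Sum>i\<le>n. fscale (v i) (e i)) j"
      proof -
        have "(\<Sum>i\<le>n. fscale (v i) (e i)) j = (\<Sum>i\<le>n. if i = j then v i else 0)"
          unfolding sum_fun_apply fscale_def e_def by (intro sum.cong) auto
        also have "\<dots> = (if j \<le> n then v j else 0)" by (simp add: sum.delta')
        also have "\<dots> = v j" by (simp add: v emb_def)
        finally show ?thesis by simp
      qed
    qed
    also have "\<dots> \<in> fv.span (e ` {..n})"
      by (intro fv.span_sum fv.span_scale fv.span_base) auto
    finally show "v \<in> fv.span (e ` {..n})" .
  qed
  have "fv.dependent (emb ` Y)"
  proof (rule ccontr)
    assume "\<not> fv.dependent (emb ` Y)"
    from fv.independent_span_bound[OF fB this sp] cV cB show False by simp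
  qed
  then obtain t u where t: "finite t" "t \<subseteq> emb ` Y" "(\<Sum>v\<in>t. fscale (u v) v) = 0" "\<exists>v\<in>t. u v \<noteq> 0"
    unfolding fv.dependent_explicit by blast
  define l where "l y = (if emb y \<in> t then u (emb y) else 0)" for y
  have key: "(\<Sum>y\<in>Y. l y * emb y j) = 0" for j
  proof -
    have "(\<Sum>y\<in>Y. l y * emb y j) = (\<Sum>v\<in>emb ` Y. (if v \<in> t then u v else 0) * v j)"
      by (subst sum.reindex[OF inj]) (simp add: l_def)
    also have "\<dots> = (\<Sum>v\<in>t. u v * v j)"
      using t(2) by (subst sum.mono_neutral_right[of "emb ` Y" t]) (auto intro: finite_imageI fY)
    also have "\<dots> = (\<Sum>v\<in>t. fscale (u v) v) j" by (simp add: sum_fun_apply fscale_def)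
    also have "\<dots> = 0" using t(3) by simp
    finally show ?thesis .
  qed
  have s0: "(\<Sum>y\<in>Y. l y) = 0" using key[of n] by (simp add: emb_def)
  have si: "\<forall>i<n. (\<Sum>y\<in>Y. l y * of_bool (y!i)) = 0"
  proof (intro allI impI)
    fix i assume "i < n" thus "(\<Sum>y\<in>Y. l y * of_bool (y!i)) = 0" using key[of i] by (simp add: emb_def)
  qed
  obtain v where v: "v \<in> t" "u v \<noteq> 0" using t(4) by blast
  then obtain y0 where y0: "y0 \<in> Y" "v = emb y0" using t(2) by blast
  have ly0: "l y0 \<noteq> 0" using v y0 by (simp add: l_def)
  have "\<exists>y\<in>Y. l y > 0"
  proof (rule ccontr)
    assume "\<not> ?thesis"
    hence nn: "\<forall>y\<in>Y. l y \<le> 0" by auto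
    have "(\<Sum>y\<in>Y. l y) < 0"
      using sum_strict_mono_ex1[of Y l "\<lambda>_. 0"] fY nn y0 ly0 by (force simp: less_le)
    with s0 show False by simp
  qed
  with s0 si show ?thesis by (intro exI[of _ l]) blast
qed
definition thr :: "nat \<Rightarrow> bool list set set" where
  "thr n = {{a \<in> cube n. (\<Sum>i<n. of_bool (a!i) * w i) < (t::real)} | w t. True}"

definition shatters :: "'a set set \<Rightarrow> 'a set \<Rightarrow> bool" where
  "shatters F Y \<longleftrightarrow> (\<forall>B\<subseteq>Y. \<exists>A\<in>F. A \<inter> Y = B)"

lemma vc_bound:
  assumes Y: "Y \<subseteq> cube n" and sh: "shatters (thr n) Y"
  shows "card Y \<le> n + 1"
proof (rule ccontr)
  assume "\<not> ?thesis"
  hence cY: "card Y \<ge> n + 2" by simp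
  have fY: "finite Y" using Y cube_finite finite_subset by blast
  obtain l :: "bool list \<Rightarrow> real" where lp: "\<exists>y\<in>Y. l y > 0"
    and li: "\<forall>i<n. (\<Sum>y\<in>Y. l y * of_bool (y!i)) = 0" and ls: "(\<Sum>y\<in>Y. l y) = 0"
    using radon_dep[OF Y cY] by blast
  obtain A where A: "A \<in> thr n" "A \<inter> Y = {y\<in>Y. l y > 0}"
  proof -
    have sub: "{y\<in>Y. l y > 0} \<subseteq> Y" by auto
    show ?thesis using sh[unfolded shatters_def, rule_format, OF sub] that by blast
  qed
  then obtain w t where At: "A = {a \<in> cube n. (\<Sum>i<n. of_bool (a!i) * w i) < (t::real)}"
    unfolding thr_def by blast
  define h where "h y = (\<Sum>i<n. of_bool (y!i) * w i) - t" for y :: "bool list"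
  have "(\<Sum>y\<in>Y. l y * h y) = (\<Sum>i<n. w i * (\<Sum>y\<in>Y. l y * of_bool (y!i))) - t * (\<Sum>y\<in>Y. l y)"
    unfolding h_def right_diff_distrib sum_subtractf sum_distrib_left sum_distrib_right
    by (subst sum.swap) (simp add: mult_ac)
  also have "\<dots> = 0" using li ls by simp
  finally have s0: "(\<Sum>y\<in>Y. l y * h y) = 0" .
  have le: "l y * h y \<le> 0" if "y \<in> Y" for y
  proof (cases "l y > 0")
    case True
    hence "y \<in> A" using A(2) that by blast
    hence "h y < 0" using At h_def by simp
    thus ?thesis using True by (simp add: mult_pos_neg less_imp_le)
  next
    case False
    hence "y \<notin> A" using A(2) that by blast
    hence "h y \<ge> 0" using At h_def that Y by auto
    thus ?thesis using False by (simp add: mult_nonpos_nonneg)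
  qed
  obtain y0 where y0: "y0 \<in> Y" "l y0 > 0" using lp by blast
  have "y0 \<in> A" using A(2) y0 by blast
  hence "h y0 < 0" using At h_def by simp
  hence lt: "l y0 * h y0 < 0" using y0 by (simp add: mult_pos_neg)
  have "(\<Sum>y\<in>Y. l y * h y) < (\<Sum>y\<in>Y. 0)"
    by (rule sum_strict_mono_ex1) (use fY le y0 lt in auto)
  with s0 show False by simp
qed

lemma pajor:
  assumes "finite X" "F \<subseteq> Pow X"
  shows "card F \<le> card {Y. Y \<subseteq> X \<and> shatters F Y}"
  using assms
proof (induction X arbitrary: F rule: finite_induct)
  case empty
  show ?case
  proof (cases "F = {}")
    case True thus ?thesis by simp
  next
    case False
    hence F: "F = {{}}" using empty by (metis Pow_empty subset_singletonD)
    have "{Y. Y \<subseteq> {} \<and> shatters F Y} = {{}}" unfolding F shatters_def by auto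
    thus ?thesis using F by simp
  qed
next
  case (insert x X)
  define F0 where "F0 = {A\<in>F. x \<notin> A}"
  define F1' where "F1' = {A\<in>F. x \<in> A}"
  define F1 where "F1 = (\<lambda>A. A - {x}) ` F1'"
  have finF: "finite F" using insert(4) by (rule finite_subset) (simp add: insert(1))
  have F0s: "F0 \<subseteq> Pow X" using insert(4) by (auto simp: F0_def)
  have F1s: "F1 \<subseteq> Pow X" using insert(4) by (auto simp: F1_def F1'_def)
  have injF1: "inj_on (\<lambda>A. A - {x}) F1'"
  proof (rule inj_onI)
    fix A B assume "A \<in> F1'" "B \<in> F1'" "A - {x} = B - {x}"
    thus "A = B" unfolding F1'_def by (metis insert_Diff mem_Collect_eq)
  qed
  have cF: "card F = card F0 + card F1"
  proof -
    have "F = F0 \<union> F1'" "F0 \<inter> F1' = {}" by (auto simp: F0_def F1'_def)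
    moreover have "finite F0" "finite F1'" using finF by (auto simp: F0_def F1'_def)
    ultimately have "card F = card F0 + card F1'" using card_Un_disjoint[of F0 F1'] by simp
    thus ?thesis using card_image[OF injF1] F1_def by simp
  qed
  define S0 where "S0 = {Y. Y \<subseteq> X \<and> shatters F0 Y}"
  define S1 where "S1 = {Y. Y \<subseteq> X \<and> shatters F1 Y}"
  define S where "S = {Y. Y \<subseteq> insert x X \<and> shatters F Y}"
  have finS: "finite S" using insert(1) by (simp add: S_def)
  have a: "S0 \<union> S1 \<subseteq> S"
  proof
    fix Y assume "Y \<in> S0 \<union> S1"
    thus "Y \<in> S"
    proof
      assume Y: "Y \<in> S0"
      show ?thesis unfolding S_def shatters_def
      proof (intro CollectI conjI allI impI)
        show "Y \<subseteq> insert x X" using Y by (auto simp: S0_def)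
        fix B assume "B \<subseteq> Y"
        then obtain A where "A \<in> F0" "A \<inter> Y = B" using Y unfolding S0_def shatters_def by blast
        thus "\<exists>A\<in>F. A \<inter> Y = B" by (auto simp: F0_def)
      qed
    next
      assume Y: "Y \<in> S1"
      hence xY: "x \<notin> Y" using insert(2) by (auto simp: S1_def)
      show ?thesis unfolding S_def shatters_def
      proof (intro CollectI conjI allI impI)
        show "Y \<subseteq> insert x X" using Y by (auto simp: S1_def)
        fix B assume "B \<subseteq> Y"
        then obtain A where "A \<in> F1" "A \<inter> Y = B" using Y unfolding S1_def shatters_def by blast
        then obtain A' where "A' \<in> F" "A' - {x} = A" by (auto simp: F1_def F1'_def)
        thus "\<exists>A\<in>F. A \<inter> Y = B" using \<open>A \<inter> Y = B\<close> xY by (intro bexI[of _ A']) auto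
      qed
    qed
  qed
  have b: "insert x ` (S0 \<inter> S1) \<subseteq> S"
  proof
    fix Z assume "Z \<in> insert x ` (S0 \<inter> S1)"
    then obtain Y where Z: "Z = insert x Y" and Y0: "Y \<in> S0" and Y1: "Y \<in> S1" by blast
    have xY: "x \<notin> Y" using insert(2) Y0 by (auto simp: S0_def)
    show "Z \<in> S" unfolding S_def shatters_def
    proof (intro CollectI conjI allI impI)
      show "Z \<subseteq> insert x X" using Y0 Z by (auto simp: S0_def)
      fix B assume B: "B \<subseteq> Z"
      show "\<exists>A\<in>F. A \<inter> Z = B"
      proof (cases "x \<in> B")
        case True
        have "B - {x} \<subseteq> Y" using B Z by auto
        then obtain A where "A \<in> F1" "A \<inter> Y = B - {x}" using Y1 unfolding S1_def shatters_def by blast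
        then obtain A' where "A' \<in> F" "x \<in> A'" "A' - {x} = A" by (auto simp: F1_def F1'_def)
        thus ?thesis using \<open>A \<inter> Y = B - {x}\<close> True Z by (intro bexI[of _ A']) auto
      next
        case False
        have "B \<subseteq> Y" using B Z False by auto
        then obtain A where "A \<in> F0" "A \<inter> Y = B" using Y0 unfolding S0_def shatters_def by blast
        thus ?thesis using False Z by (intro bexI[of _ A]) (auto simp: F0_def)
      qed
    qed
  qed
  have disj: "(S0 \<union> S1) \<inter> insert x ` (S0 \<inter> S1) = {}"
    using insert(2) by (auto simp: S0_def S1_def)
  have injx: "inj_on (insert x) (S0 \<inter> S1)"
  proof (rule inj_onI)
    fix A B assume "A \<in> S0 \<inter> S1" "B \<in> S0 \<inter> S1" "insert x A = insert x B"
    moreover have "x \<notin> A" "x \<notin> B" using calculation insert(2) by (auto simp: S0_def)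
    ultimately show "A = B" by (metis Diff_insert_absorb)
  qed
  have fin01: "finite S0" "finite S1" using insert(1) by (auto simp: S0_def S1_def)
  have "card S0 + card S1 = card (S0 \<union> S1) + card (S0 \<inter> S1)"
    using card_Un_Int[OF fin01] .
  also have "\<dots> = card (S0 \<union> S1) + card (insert x ` (S0 \<inter> S1))"
    using card_image[OF injx] by simp
  also have "\<dots> = card ((S0 \<union> S1) \<union> insert x ` (S0 \<inter> S1))"
    using disj fin01 by (subst card_Un_disjoint) auto
  also have "\<dots> \<le> card S" using a b finS by (intro card_mono) auto
  finally have "card S0 + card S1 \<le> card S" .
  moreover have "card F0 \<le> card S0" using insert(3)[OF F0s] by (simp add: S0_def)
  moreover have "card F1 \<le> card S1" using insert(3)[OF F1s] by (simp add: S1_def)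
  ultimately show ?case using cF by (simp add: S_def)
qed


lemma sum_pow_le: "(\<Sum>k\<le>d. (m::nat)^k) \<le> (m+1)^d"
proof (induction d)
  case (Suc d)
  have "(\<Sum>k\<le>Suc d. m^k) = 1 + m * (\<Sum>k\<le>d. m^k)"
    by (simp only: sum.atMost_Suc_shift power_Suc sum_distrib_left) simp
  also have "\<dots> \<le> 1 + m * (m+1)^d" using Suc by simp
  also have "\<dots> \<le> (m+1)^d + m * (m+1)^d" by simp
  also have "\<dots> = (m+1)^Suc d" by simp
  finally show ?case .
qed simp

lemma card_small_subsets:
  assumes "finite X"
  shows "card {Y. Y \<subseteq> X \<and> card Y \<le> d} \<le> (card X + 1)^d"
proof -
  have "{Y. Y \<subseteq> X \<and> card Y \<le> d} = (\<Union>k\<le>d. {Y. Y \<subseteq> X \<and> card Y = k})" by auto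
  hence "card {Y. Y \<subseteq> X \<and> card Y \<le> d} \<le> (\<Sum>k\<le>d. card {Y. Y \<subseteq> X \<and> card Y = k})"
    using card_UN_le[of "{..d}" "\<lambda>k. {Y. Y \<subseteq> X \<and> card Y = k}"] by simp
  also have "\<dots> = (\<Sum>k\<le>d. card X choose k)" using n_subsets[OF assms] by simp
  also have "\<dots> \<le> (\<Sum>k\<le>d. card X ^ k)"
  proof (rule sum_mono)
    fix k show "card X choose k \<le> card X ^ k"
      by (cases "k \<le> card X") (auto simp: binomial_le_pow binomial_eq_0)
  qed
  also have "\<dots> \<le> (card X + 1)^d" by (rule sum_pow_le)
  finally show ?thesis .
qed

lemma card_cube: "card (cube n) = 2^n"
proof -
  have "cube n = {xs. set xs \<subseteq> (UNIV::bool set) \<and> length xs = n}" by (auto simp: cube_def)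
  thus ?thesis using card_lists_length_eq[of "UNIV::bool set" n] by simp
qed

lemma thr_sub: "thr n \<subseteq> Pow (cube n)"
  unfolding thr_def by auto

lemma thr_finite: "finite (thr n)"
  using thr_sub cube_finite finite_subset by (metis finite_Pow_iff)

lemma thr_card: "card (thr n) \<le> 2^((n+1)^2)"
proof -
  have "card (thr n) \<le> card {Y. Y \<subseteq> cube n \<and> shatters (thr n) Y}"
    by (rule pajor[OF cube_finite thr_sub])
  also have "\<dots> \<le> card {Y. Y \<subseteq> cube n \<and> card Y \<le> n + 1}"
  proof (rule card_mono)
    show "finite {Y. Y \<subseteq> cube n \<and> card Y \<le> n + 1}" using cube_finite by simp
    show "{Y. Y \<subseteq> cube n \<and> shatters (thr n) Y} \<subseteq> {Y. Y \<subseteq> cube n \<and> card Y \<le> n + 1}"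
      using vc_bound by blast
  qed
  also have "\<dots> \<le> (2^n + 1)^(n+1)"
    using card_small_subsets[OF cube_finite, of n "n+1"] by (simp add: card_cube)
  also have "\<dots> \<le> (2^(n+1))^(n+1)" by (intro power_mono) auto
  also have "\<dots> = 2^((n+1)^2)" by (simp add: power_mult[symmetric] power2_eq_square power_add)
  finally show ?thesis .
qed


lemma edist_less_iff:
  "edist n a b < edist n a c \<longleftrightarrow>
   (\<Sum>i<n. of_bool (a!i) * (2 * c!i - 2 * b!i)) < (\<Sum>i<n. (c!i)^2 - (b!i)^2)"
proof -
  have "edist n a b < edist n a c \<longleftrightarrow>
        (\<Sum>i<n. (of_bool (a!i) - b!i)^2) < (\<Sum>i<n. (of_bool (a!i) - c!i)^2)"
    unfolding edist_def by (rule real_sqrt_less_iff)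
  also have "\<dots> \<longleftrightarrow> (\<Sum>i<n. (of_bool (a!i) - b!i)^2) - (\<Sum>i<n. (of_bool (a!i) - c!i)^2) < 0" by simp
  also have "(\<Sum>i<n. (of_bool (a!i) - b!i)^2) - (\<Sum>i<n. (of_bool (a!i) - c!i)^2)
       = (\<Sum>i<n. of_bool (a!i) * (2 * c!i - 2 * b!i)) - (\<Sum>i<n. (c!i)^2 - (b!i)^2)"
    unfolding sum_subtractf[symmetric]
    by (rule sum.cong) (simp_all add: power2_eq_square algebra_simps)
  finally show ?thesis by simp
qed

lemma cmp_thr: "{a\<in>cube n. edist n a b < edist n a c} \<in> thr n"
  unfolding thr_def mem_Collect_eq
  by (rule exI[of _ "\<lambda>i. 2 * c!i - 2 * b!i"], rule exI[of _ "\<Sum>i<n. (c!i)^2 - (b!i)^2"])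
     (simp add: edist_less_iff)

lemma edist_self: "length a = n \<Longrightarrow> edist n a (map of_bool a) = 0"
  by (simp add: edist_def)

lemma edist_pos:
  assumes "a \<in> cube n" "a' \<in> cube n" "a \<noteq> a'"
  shows "edist n a (map of_bool a') > 0"
proof -
  have l: "length a = n" "length a' = n" using assms by (auto simp: cube_def)
  have "\<not> (\<forall>i<n. a!i = a'!i)" using l assms(3) nth_equalityI[of a a'] by auto
  then obtain i where i: "i < n" "a!i \<noteq> a'!i" by blast
  have "(\<Sum>j<n. (of_bool (a!j) - map of_bool a' ! j)^2) > (0::real)"
  proof (rule sum_pos2[of "{..<n}" i])
    show "(0::real) < (of_bool (a!i) - map of_bool a' ! i)^2" using i l by (cases "a!i"; cases "a'!i") auto
  qed (use i in auto)
  thus ?thesis by (simp add: edist_def)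
qed

lemma rep_exists:
  assumes f: "f \<in> boolfuns n"
  shows "\<exists>P N. is_nn_rep n f P N"
proof -
  define P :: "real list set" where "P = map of_bool ` {a\<in>cube n. f a}"
  define N :: "real list set" where "N = map of_bool ` {a\<in>cube n. \<not> f a}"
  have inj: "inj (map (of_bool :: bool \<Rightarrow> real))"
    by (rule inj_mapI) (auto simp: inj_def)
  have "is_nn_rep n f P N"
    unfolding is_nn_rep_def
  proof (intro conjI ballI)
    show "P \<subseteq> rpoints n" "N \<subseteq> rpoints n" by (auto simp: P_def N_def rpoints_def cube_def)
    show "finite P" "finite N" using cube_finite by (auto simp: P_def N_def)
    show "P \<inter> N = {}" using inj by (auto simp: P_def N_def inj_def)
    fix a assume a: "a \<in> cube n"
    have la: "length a = n" using a by (simp add: cube_def)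
    show "f a \<longrightarrow> (\<exists>b\<in>P. \<forall>c\<in>N. edist n a b < edist n a c)"
    proof
      assume "f a"
      hence "map of_bool a \<in> P" using a by (auto simp: P_def)
      moreover have "\<forall>c\<in>N. edist n a (map of_bool a) < edist n a c"
        using edist_pos[OF a] \<open>f a\<close> by (auto simp: N_def edist_self[OF la])
      ultimately show "\<exists>b\<in>P. \<forall>c\<in>N. edist n a b < edist n a c" by blast
    qed
    show "\<not> f a \<longrightarrow> (\<exists>b\<in>N. \<forall>c\<in>P. edist n a b < edist n a c)"
    proof
      assume "\<not> f a"
      hence "map of_bool a \<in> N" using a by (auto simp: N_def)
      moreover have "\<forall>c\<in>P. edist n a (map of_bool a) < edist n a c"
        using edist_pos[OF a] \<open>\<not> f a\<close> by (auto simp: P_def edist_self[OF la])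
      ultimately show "\<exists>b\<in>N. \<forall>c\<in>P. edist n a b < edist n a c" by blast
    qed
  qed
  thus ?thesis by blast
qed

lemma rep_formula:
  assumes r: "is_nn_rep n f P N" and a: "a \<in> cube n"
  shows "f a = (\<exists>b\<in>P. \<forall>c\<in>N. edist n a b < edist n a c)"
proof (cases "f a")
  case True thus ?thesis using r a by (auto simp: is_nn_rep_def)
next
  case False
  then obtain b' where b': "b' \<in> N" "\<forall>c\<in>P. edist n a b' < edist n a c"
    using r a unfolding is_nn_rep_def by blast
  have "\<not> (\<exists>b\<in>P. \<forall>c\<in>N. edist n a b < edist n a c)"
  proof
    assume "\<exists>b\<in>P. \<forall>c\<in>N. edist n a b < edist n a c"
    then obtain b where "b \<in> P" "\<forall>c\<in>N. edist n a b < edist n a c" by blast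
    with b' have "edist n a b < edist n a b'" "edist n a b' < edist n a b" by auto
    thus False by simp
  qed
  with False show ?thesis by simp
qed

definition Phi :: "nat \<Rightarrow> nat \<Rightarrow> nat \<Rightarrow> (nat \<times> nat \<Rightarrow> bool list set) \<Rightarrow> bool list \<Rightarrow> bool" where
  "Phi n p q g = (\<lambda>a. if a \<in> cube n then (\<exists>i<p. \<forall>j<q. a \<in> g (i, j)) else undefined)"

lemma bad_subset:
  "{f \<in> boolfuns n. NN n f \<le> k} \<subseteq>
   (\<Union>pq\<in>{pq \<in> {..k}\<times>{..k}. fst pq + snd pq \<le> k}.
      Phi n (fst pq) (snd pq) ` (({0..<fst pq}\<times>{0..<snd pq}) \<rightarrow>\<^sub>E thr n))"
proof
  fix f assume "f \<in> {f \<in> boolfuns n. NN n f \<le> k}"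
  hence f: "f \<in> boolfuns n" and fk: "NN n f \<le> k" by auto
  obtain P0 N0 where "is_nn_rep n f P0 N0" using rep_exists[OF f] by blast
  hence "\<exists>m P N. is_nn_rep n f P N \<and> card (P \<union> N) = m" by blast
  hence "\<exists>P N. is_nn_rep n f P N \<and> card (P \<union> N) = NN n f"
    unfolding NN_def by (rule LeastI_ex)
  then obtain P N where r: "is_nn_rep n f P N" and cPN: "card (P \<union> N) = NN n f" by blast
  have fin: "finite P" "finite N" and dis: "P \<inter> N = {}" and sub: "P \<subseteq> rpoints n" "N \<subseteq> rpoints n"
    using r by (auto simp: is_nn_rep_def)
  define p where "p = card P"
  define q where "q = card N"
  have pq: "p + q \<le> k" using cPN fk card_Un_disjoint[OF fin dis] by (simp add: p_def q_def)
  obtain bp where bp: "bij_betw bp {0..<p} P" using ex_bij_betw_nat_finite[OF fin(1)] p_def by blast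
  obtain bq where bq: "bij_betw bq {0..<q} N" using ex_bij_betw_nat_finite[OF fin(2)] q_def by blast
  define g where "g = (\<lambda>ij\<in>{0..<p}\<times>{0..<q}. {a\<in>cube n. edist n a (bp (fst ij)) < edist n a (bq (snd ij))})"
  have gP: "g \<in> ({0..<p}\<times>{0..<q}) \<rightarrow>\<^sub>E thr n" unfolding g_def using cmp_thr by auto
  have "f = Phi n p q g"
  proof
    fix a
    show "f a = Phi n p q g a"
    proof (cases "a \<in> cube n")
      case True
      have "f a = (\<exists>b\<in>P. \<forall>c\<in>N. edist n a b < edist n a c)" by (rule rep_formula[OF r True])
      also have "\<dots> = (\<exists>i\<in>{0..<p}. \<forall>j\<in>{0..<q}. edist n a (bp i) < edist n a (bq j))"
        using bp bq unfolding bij_betw_def by auto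
      also have "\<dots> = (\<exists>i<p. \<forall>j<q. edist n a (bp i) < edist n a (bq j))"
        by (simp only: atLeastLessThan_iff Bex_def Ball_def le0 simp_thms)
      also have "\<dots> = (\<exists>i<p. \<forall>j<q. a \<in> g (i, j))"
      proof -
        have "\<And>i j. i < p \<Longrightarrow> j < q \<Longrightarrow> (a \<in> g (i, j)) = (edist n a (bp i) < edist n a (bq j))"
          using True by (simp add: g_def)
        thus ?thesis by (meson)
      qed
      also have "\<dots> = Phi n p q g a" using True by (simp add: Phi_def)
      finally show ?thesis .
    next
      case False
      have "f a = undefined" using f False unfolding boolfuns_def by (rule PiE_arb)
      moreover have "Phi n p q g a = undefined" using False unfolding Phi_def by simp
      ultimately show ?thesis by simp
    qed
  qed
  hence fim: "f \<in> Phi n (fst (p,q)) (snd (p,q)) ` (({0..<fst (p,q)}\<times>{0..<snd (p,q)}) \<rightarrow>\<^sub>E thr n)"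
    using gP by simp
  have pqm: "(p, q) \<in> {pq \<in> {..k}\<times>{..k}. fst pq + snd pq \<le> k}" using pq by auto
  show "f \<in> (\<Union>pq\<in>{pq \<in> {..k}\<times>{..k}. fst pq + snd pq \<le> k}.
      Phi n (fst pq) (snd pq) ` (({0..<fst pq}\<times>{0..<snd pq}) \<rightarrow>\<^sub>E thr n))"
    using UN_I[where B="\<lambda>pq. Phi n (fst pq) (snd pq) ` (({0..<fst pq}\<times>{0..<snd pq}) \<rightarrow>\<^sub>E thr n)", OF pqm fim] .
qed


lemma arith1:
  assumes n: "n \<ge> 3" and pq: "p + q \<le> k" and kn: "(k*n)^2 \<le> 2^n"
  shows "(n+1)^2 * (p*q) \<le> 2^(n-1)"
proof -
  have "4*(p*q) \<le> (p+q)^2"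
  proof -
    have "0 \<le> (int p - int q)^2" by simp
    hence "int (4*(p*q)) \<le> int ((p+q)^2)"
      by (simp add: power2_eq_square algebra_simps)
    thus ?thesis by linarith
  qed
  also have "\<dots> \<le> k^2" using pq by (simp add: power_mono)
  finally have a: "4*(p*q) \<le> k^2" .
  have b: "(n+1)^2 \<le> 2*n^2"
  proof -
    have "(n+1)^2 = n^2 + 2*n + 1" by (simp add: power2_eq_square algebra_simps)
    moreover have "2*n + 1 \<le> n^2"
    proof -
      have "3*n \<le> n*n" using mult_le_mono1[OF n, of n] by simp
      hence "2*n+1 \<le> n*n" using n by linarith
      thus ?thesis by (simp add: power2_eq_square)
    qed
    ultimately show ?thesis by simp
  qed
  have "4*((n+1)^2 * (p*q)) = (n+1)^2 * (4*(p*q))" by simp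
  also have "\<dots> \<le> (2*n^2) * k^2" using a b by (intro mult_mono) auto
  also have "\<dots> = 2*(k*n)^2" by (simp add: power_mult_distrib)
  also have "\<dots> \<le> 2*2^n" using kn by simp
  also have "\<dots> = 4*2^(n-1)" using n by (cases n) auto
  finally show ?thesis by simp
qed

lemma bad_card:
  assumes n: "n \<ge> 3" and kn: "(k*n)^2 \<le> 2^n"
  shows "card {f \<in> boolfuns n. NN n f \<le> k} \<le> (k+1)^2 * 2^(2^(n-1))"
proof -
  define I where "I = {pq \<in> {..k}\<times>{..k}. fst pq + snd pq \<le> k}"
  define A where "A pq = Phi n (fst pq) (snd pq) ` (({0..<fst pq}\<times>{0..<snd pq}) \<rightarrow>\<^sub>E thr n)" for pq
  have fI: "finite I" by (simp add: I_def)
  have cI: "card I \<le> (k+1)^2"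
  proof -
    have "card I \<le> card ({..k}\<times>{..k})" by (rule card_mono) (auto simp: I_def)
    thus ?thesis by (simp add: card_cartesian_product power2_eq_square)
  qed
  have cA: "card (A pq) \<le> 2^(2^(n-1))" if "pq \<in> I" for pq
  proof -
    obtain p q where pq: "pq = (p,q)" by fastforce
    have pqk: "p + q \<le> k" using that pq by (simp add: I_def)
    have "card (A pq) \<le> card (({0..<p}\<times>{0..<q}) \<rightarrow>\<^sub>E thr n)"
      unfolding A_def pq by (simp add: card_image_le finite_PiE thr_finite)
    also have "\<dots> = card (thr n) ^ (p*q)" by (simp add: card_funcsetE card_cartesian_product)
    also have "\<dots> \<le> (2^((n+1)^2))^(p*q)" by (rule power_mono[OF thr_card]) simp
    also have "\<dots> = 2^((n+1)^2*(p*q))" by (simp add: power_mult)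
    also have "\<dots> \<le> 2^(2^(n-1))" by (rule power_increasing[OF arith1[OF n pqk kn]]) simp
    finally show ?thesis .
  qed
  have "card {f \<in> boolfuns n. NN n f \<le> k} \<le> card (\<Union>pq\<in>I. A pq)"
    using bad_subset[of n k] unfolding I_def A_def
    by (intro card_mono) (auto simp: finite_PiE thr_finite)
  also have "\<dots> \<le> (\<Sum>pq\<in>I. card (A pq))" by (rule card_UN_le[OF fI])
  also have "\<dots> \<le> (\<Sum>pq\<in>I. 2^(2^(n-1)))" by (rule sum_mono[OF cA])
  also have "\<dots> = card I * 2^(2^(n-1))" by simp
  also have "\<dots> \<le> (k+1)^2 * 2^(2^(n-1))" using cI by simp
  finally show ?thesis .
qed


lemma pow_ge: "n \<ge> 6 \<Longrightarrow> 3*n \<le> 2^(n-1)"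
proof (induction n rule: nat_induct_at_least)
  case base thus ?case by simp
next
  case (Suc m)
  have "(2::nat)^(Suc m - 1) = 2 * 2^(m-1)" using Suc(1) by (cases m) auto
  thus ?case using Suc by simp
qed

lemma card_boolfuns: "card (boolfuns n) = 2^(2^n)"
  unfolding boolfuns_def by (simp add: card_funcsetE cube_finite card_cube)

lemma finite_boolfuns: "finite (boolfuns n)"
  unfolding boolfuns_def by (simp add: finite_PiE cube_finite)

lemma bad_ratio:
  assumes n: "n \<ge> 6" and kn: "(k*n)^2 \<le> 2^n"
  shows "real (card {f \<in> boolfuns n. NN n f \<le> k}) / 2^(2^n) \<le> 4 * (1/2)^n"
proof -
  define X :: nat where "X = 2^(2^(n-1))"
  define B where "B = card {f \<in> boolfuns n. NN n f \<le> k}"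
  have "k \<le> k*n" using n by simp
  also have "\<dots> \<le> (k*n)^2" by (simp add: power2_eq_square)
  also have "\<dots> \<le> 2^n" by (rule kn)
  finally have k2: "k \<le> 2^n" .
  have "(1::nat) \<le> 2^n" by simp
  hence "k+1 \<le> 2*2^n" using k2 by linarith
  hence "(k+1)^2 \<le> (2*2^n)^2" by (intro power_mono) auto
  also have "\<dots> = 4*((2::nat)^n*2^n)" by (simp add: power2_eq_square)
  also have "(2::nat)^n*2^n = (2*2)^n" by (rule power_mult_distrib[symmetric])
  also have "4*(2*2::nat)^n = 4*4^n" by simp
  finally have k1: "(k+1)^2 \<le> 4*4^n" .
  have B: "B \<le> 4*4^n*X"
  proof -
    have "B \<le> (k+1)^2 * X" unfolding B_def X_def by (rule bad_card) (use n kn in auto)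
    also have "\<dots> \<le> 4*4^n*X" using k1 by (rule mult_right_mono) simp
    finally show ?thesis .
  qed
  have X8: "8^n \<le> X"
  proof -
    have "(8::nat)^n = 2^(3*n)" by (simp add: power_mult)
    also have "\<dots> \<le> 2^(2^(n-1))" using pow_ge[OF n] by (intro power_increasing) auto
    finally show ?thesis by (simp add: X_def)
  qed
  have XX: "(2::real)^(2^n) = real X * real X"
  proof -
    have "(2::nat)^n = 2^(n-1) + 2^(n-1)" using n by (cases n) auto
    thus ?thesis by (simp add: X_def power_add)
  qed
  have Xpos: "real X > 0" by (simp add: X_def)
  have "real B / 2^(2^n) \<le> real (4*4^n*X) / (real X * real X)"
    unfolding XX using B by (intro divide_right_mono) (auto simp del: of_nat_mult)
  also have "\<dots> = 4*4^n / real X" using Xpos by (simp add: field_simps)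
  also have "\<dots> \<le> 4*4^n / 8^n"
  proof -
    have "(8::real)^n \<le> real X" using X8 by (metis of_nat_le_iff of_nat_numeral of_nat_power)
    thus ?thesis using Xpos by (intro divide_left_mono) auto
  qed
  also have "\<dots> = 4 * (1/2)^n"
  proof -
    have "(4::real)^n / 8^n = (4/8)^n" by (rule power_divide[symmetric])
    also have "(4/8::real) = 1/2" by simp
    finally have "(4::real)^n / 8^n = (1/2)^n" .
    hence "4 * (4::real)^n / 8^n = 4 * (1/2)^n" by (simp only: times_divide_eq_right[symmetric])
    thus ?thesis .
  qed
  finally show ?thesis by (simp add: B_def)
qed


theorem theorem5:
  shows "(\<lambda>n. real (card {f \<in> boolfuns n. real (NN n f) > 2 powr (real n / 2) / real n})
              / real (card (boolfuns n))) \<longlonglongrightarrow> 1"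
proof -
  define K where "K n = 2 powr (real n / 2) / real n" for n :: nat
  define k where "k n = nat \<lfloor>K n\<rfloor>" for n
  define r where "r n = real (card {f \<in> boolfuns n. NN n f \<le> k n}) / 2^(2^n)" for n
  have K0: "K n \<ge> 0" for n by (simp add: K_def)
  have seteq: "{f \<in> boolfuns n. real (NN n f) > K n} = boolfuns n - {f \<in> boolfuns n. NN n f \<le> k n}" for n
  proof -
    have "real (NN n f) > K n \<longleftrightarrow> \<not> NN n f \<le> k n" for f
    proof -
      have "NN n f \<le> k n \<longleftrightarrow> int (NN n f) \<le> \<lfloor>K n\<rfloor>" using K0[of n] by (simp add: k_def le_nat_iff)
      also have "\<dots> \<longleftrightarrow> real (NN n f) \<le> K n" by (simp add: le_floor_iff)
      finally show ?thesis by linarith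
    qed
    thus ?thesis by auto
  qed
  have eq: "real (card {f \<in> boolfuns n. real (NN n f) > K n}) / real (card (boolfuns n)) = 1 - r n" for n
  proof -
    have sub: "{f \<in> boolfuns n. NN n f \<le> k n} \<subseteq> boolfuns n" by auto
    have "card {f \<in> boolfuns n. real (NN n f) > K n} = card (boolfuns n) - card {f \<in> boolfuns n. NN n f \<le> k n}"
      unfolding seteq by (rule card_Diff_subset) (use sub finite_boolfuns finite_subset in auto)
    moreover have "card {f \<in> boolfuns n. NN n f \<le> k n} \<le> card (boolfuns n)"
      by (rule card_mono[OF finite_boolfuns sub])
    ultimately have "real (card {f \<in> boolfuns n. real (NN n f) > K n}) =
        real (card (boolfuns n)) - real (card {f \<in> boolfuns n. NN n f \<le> k n})" by simp
    thus ?thesis by (simp add: r_def card_boolfuns diff_divide_distrib)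
  qed
  have kn: "(k n * n)^2 \<le> 2^n" if "n \<ge> 1" for n
  proof -
    have "real (k n) \<le> K n" using K0[of n] by (simp add: k_def)
    hence "real (k n) * real n \<le> 2 powr (real n / 2)" using that by (simp add: K_def field_simps)
    hence "(real (k n) * real n)^2 \<le> (2 powr (real n / 2))^2" by (intro power_mono) auto
    also have "\<dots> = 2 powr real n" by (simp add: powr_realpow[symmetric] powr_powr)
    also have "\<dots> = 2^n" by (simp add: powr_realpow)
    finally have "real ((k n * n)^2) \<le> real (2^n)" by simp
    thus ?thesis by (simp only: of_nat_le_iff)
  qed
  have rb: "\<forall>\<^sub>F n in sequentially. r n \<le> 4 * (1/2)^n"
    unfolding eventually_sequentially r_def using bad_ratio kn by (intro exI[of _ 6]) auto
  have r0: "\<forall>\<^sub>F n in sequentially. 0 \<le> r n" by (simp add: r_def)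
  have "(\<lambda>n. 4 * (1/2::real)^n) \<longlonglongrightarrow> 4 * 0"
    by (intro tendsto_mult tendsto_const LIMSEQ_power_zero) auto
  hence "r \<longlonglongrightarrow> 0" using tendsto_sandwich[OF r0 rb] by simp
  hence "(\<lambda>n. 1 - r n) \<longlonglongrightarrow> 1 - 0" by (intro tendsto_diff tendsto_const)
  thus ?thesis using eq unfolding K_def by simp
qed

end
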